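(* Let $n\ge1$, let $C$ be a cyclic group of order $n$ with generator $c_0$, and let $A$ be a finite abelian group with $A=\langle e_r\rangle\times\cdots\times\langle e_1\rangle$, where $e_i$ has order $d_i$. Let $G$ and $H$ be groups each containing $C$ as a central subgroup, with surjections $\pi_G:G\to A$, $\pi_H:H\to A$ with kernel $C$. Assume $\phi_G=\phi_H$, and that for each $1\le i\le r$ there exist $g_i\in G$, $h_i\in H$ with $\pi_G(g_i)=e_i=\pi_H(h_i)$ such that $g_i$ and $h_i$ have the same order, this order being either $d_i$ or $2d_i$. Then there exists a group isomorphism $f:G\to H$ which restricts to the identity on $C$ (in particular $f(c_0)=c_0$).
   Context: $[g,h]=ghg^{-1}h^{-1}$. For a group $G$ containing a central cyclic subgroup $C=\langle c_0\rangle$ of order $n$ with abelian quotient $A$ via $\pi_G$, the form $\phi_G:A\times A\to\mathbb{Z}/n$ is defined by $[\hat a,\hat b]=c_0^{\phi_G(a,b)}$ for any lifts $\hat a,\hat b$ of $a,b$ (this is independent of the lifts). *)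

theory Defs
  imports "HOL-Algebra.Algebra"
begin

definition commutator :: "('a, 'm) monoid_scheme \<Rightarrow> 'a \<Rightarrow> 'a \<Rightarrow> 'a" where
  "commutator G g h = g \<otimes>\<^bsub>G\<^esub> h \<otimes>\<^bsub>G\<^esub> inv\<^bsub>G\<^esub> g \<otimes>\<^bsub>G\<^esub> inv\<^bsub>G\<^esub> h"

text \<open>The form phi_G : A x A -> Z/n, with values represented in {0..<n}:
  [a_hat, b_hat] = c0^(phi_G(a,b)) for (chosen) lifts a_hat, b_hat of a, b.\<close>
definition phi_form ::
  "('a, 'm) monoid_scheme \<Rightarrow> ('a \<Rightarrow> 'b) \<Rightarrow> 'a \<Rightarrow> nat \<Rightarrow> 'b \<Rightarrow> 'b \<Rightarrow> nat" where
  "phi_form G \<pi> c0 n a b =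
     (THE k. k < n \<and>
        commutator G (SOME g. g \<in> carrier G \<and> \<pi> g = a) (SOME h. h \<in> carrier G \<and> \<pi> h = b)
          = c0 [^]\<^bsub>G\<^esub> k)"

definition is_internal_cyclic_decomp :: "('b, 'n) monoid_scheme \<Rightarrow> (nat \<Rightarrow> 'b) \<Rightarrow> nat \<Rightarrow> bool" where
  "is_internal_cyclic_decomp A e r \<longleftrightarrow>
     (\<forall>i\<in>{1..r}. e i \<in> carrier A) \<and>
     bij_betw (\<lambda>k. finprod A (\<lambda>i. e i [^]\<^bsub>A\<^esub> k i) {1..r})
       (Pi\<^sub>E {1..r} (\<lambda>i. {..<group.ord A (e i)})) (carrier A)"

end

theory Submission
  imports Defs
begin


lemma sub_one:
  assumes "group G" "group C" "subgroup (carrier C) G"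
    "\<forall>x\<in>carrier C. \<forall>y\<in>carrier C. x \<otimes>\<^bsub>C\<^esub> y = x \<otimes>\<^bsub>G\<^esub> y"
  shows "\<one>\<^bsub>C\<^esub> = \<one>\<^bsub>G\<^esub>"
proof -
  interpret G: group G by fact
  interpret C: group C by fact
  have o: "\<one>\<^bsub>C\<^esub> \<in> carrier C" by (rule C.one_closed)
  have oG: "\<one>\<^bsub>C\<^esub> \<in> carrier G" by (rule subgroup.mem_carrier[OF assms(3) o])
  have e: "\<one>\<^bsub>C\<^esub> \<otimes>\<^bsub>G\<^esub> \<one>\<^bsub>C\<^esub> = \<one>\<^bsub>C\<^esub>" using assms(4) o C.l_one by metis
  show ?thesis using G.l_cancel_one[OF oG oG] e by simp
qed
lemma sub_pow:
  assumes "group G" "group C" "subgroup (carrier C) G"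
    "\<forall>x\<in>carrier C. \<forall>y\<in>carrier C. x \<otimes>\<^bsub>C\<^esub> y = x \<otimes>\<^bsub>G\<^esub> y"
    "c \<in> carrier C"
  shows "c [^]\<^bsub>C\<^esub> (k::nat) = c [^]\<^bsub>G\<^esub> k"
proof (induction k)
  case 0
  then show ?case using sub_one[OF assms(1-4)] by simp
next
  case (Suc k)
  interpret C: group C by fact
  have "c [^]\<^bsub>C\<^esub> k \<in> carrier C" using assms(5) by simp
  then show ?case using Suc assms(4,5) by (simp add: C.nat_pow_Suc)
qed

lemma pow_mod_ord:
  assumes "group G" "x \<in> carrier G" "x [^]\<^bsub>G\<^esub> (d::nat) = \<one>\<^bsub>G\<^esub>"
  shows "x [^]\<^bsub>G\<^esub> (a::nat) = x [^]\<^bsub>G\<^esub> (a mod d)"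
proof -
  interpret G: group G by fact
  have "x [^]\<^bsub>G\<^esub> a = x [^]\<^bsub>G\<^esub> (d * (a div d) + a mod d)" by simp
  also have "\<dots> = (x [^]\<^bsub>G\<^esub> d) [^]\<^bsub>G\<^esub> (a div d) \<otimes>\<^bsub>G\<^esub> x [^]\<^bsub>G\<^esub> (a mod d)"
    using assms(2) by (simp add: G.nat_pow_mult G.nat_pow_pow)
  also have "\<dots> = x [^]\<^bsub>G\<^esub> (a mod d)" using assms by simp
  finally show ?thesis .
qed

lemma comm_swap:
  assumes "group G" "x \<in> carrier G" "y \<in> carrier G"
  shows "commutator G x y \<otimes>\<^bsub>G\<^esub> (y \<otimes>\<^bsub>G\<^esub> x) = x \<otimes>\<^bsub>G\<^esub> y"
proof -
  interpret G: group G by fact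
  have a: "inv\<^bsub>G\<^esub> y \<otimes>\<^bsub>G\<^esub> (y \<otimes>\<^bsub>G\<^esub> x) = x"
    using assms(2,3) by (simp add: G.m_assoc[symmetric])
  show ?thesis using assms(2,3) a
    by (simp add: commutator_def G.m_assoc)
qed


lemma comm_central:
  assumes "group G" "x \<in> carrier G" "y \<in> carrier G" "c \<in> carrier G" "c' \<in> carrier G"
    "\<forall>g\<in>carrier G. c \<otimes>\<^bsub>G\<^esub> g = g \<otimes>\<^bsub>G\<^esub> c"
    "\<forall>g\<in>carrier G. c' \<otimes>\<^bsub>G\<^esub> g = g \<otimes>\<^bsub>G\<^esub> c'"
  shows "commutator G (x \<otimes>\<^bsub>G\<^esub> c) (y \<otimes>\<^bsub>G\<^esub> c') = commutator G x y"
proof -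
  interpret G: group G by fact
  note cl = assms(2-5)
  have ic: "inv\<^bsub>G\<^esub> c \<in> carrier G" "inv\<^bsub>G\<^esub> c' \<in> carrier G" using cl by auto
  have ix: "inv\<^bsub>G\<^esub> x \<in> carrier G" "inv\<^bsub>G\<^esub> y \<in> carrier G" using cl by auto
  have c1: "c \<otimes>\<^bsub>G\<^esub> y = y \<otimes>\<^bsub>G\<^esub> c" using assms(6) cl by blast
  have c2: "c' \<otimes>\<^bsub>G\<^esub> inv\<^bsub>G\<^esub> c = inv\<^bsub>G\<^esub> c \<otimes>\<^bsub>G\<^esub> c'" using assms(7) ic by blast
  have c3: "c' \<otimes>\<^bsub>G\<^esub> inv\<^bsub>G\<^esub> x = inv\<^bsub>G\<^esub> x \<otimes>\<^bsub>G\<^esub> c'" using assms(7) ix by blast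
  have c4: "c \<otimes>\<^bsub>G\<^esub> inv\<^bsub>G\<^esub> x = inv\<^bsub>G\<^esub> x \<otimes>\<^bsub>G\<^esub> c" using assms(6) ix by blast
  have c5: "c' \<otimes>\<^bsub>G\<^esub> inv\<^bsub>G\<^esub> x \<otimes>\<^bsub>G\<^esub> inv\<^bsub>G\<^esub> c' = inv\<^bsub>G\<^esub> x"
    using c3 cl ix by (simp add: G.m_assoc)
  have "commutator G (x \<otimes>\<^bsub>G\<^esub> c) (y \<otimes>\<^bsub>G\<^esub> c') =
     x \<otimes>\<^bsub>G\<^esub> c \<otimes>\<^bsub>G\<^esub> y \<otimes>\<^bsub>G\<^esub> c' \<otimes>\<^bsub>G\<^esub> inv\<^bsub>G\<^esub> c \<otimes>\<^bsub>G\<^esub> inv\<^bsub>G\<^esub> x \<otimes>\<^bsub>G\<^esub> inv\<^bsub>G\<^esub> c' \<otimes>\<^bsub>G\<^esub> inv\<^bsub>G\<^esub> y"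
    using cl by (simp add: commutator_def G.inv_mult_group G.m_assoc)
  also have "\<dots> = x \<otimes>\<^bsub>G\<^esub> y \<otimes>\<^bsub>G\<^esub> (c \<otimes>\<^bsub>G\<^esub> inv\<^bsub>G\<^esub> c) \<otimes>\<^bsub>G\<^esub> inv\<^bsub>G\<^esub> x \<otimes>\<^bsub>G\<^esub> (c' \<otimes>\<^bsub>G\<^esub> inv\<^bsub>G\<^esub> c') \<otimes>\<^bsub>G\<^esub> inv\<^bsub>G\<^esub> y"
    using cl ic ix by (simp add: G.m_assoc c1 c2 flip: c3) (simp add: G.m_assoc[symmetric] c1 c5)
  also have "\<dots> = commutator G x y"
    using cl by (simp add: commutator_def)
  finally show ?thesis .
qed
lemma comm_in_ker:
  assumes "group G" "comm_group A" "\<pi> \<in> hom G A" "x \<in> carrier G" "y \<in> carrier G"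
  shows "commutator G x y \<in> kernel G A \<pi>"
proof -
  interpret G: group G by fact
  interpret A: comm_group A by fact
  interpret h: group_hom G A \<pi> by (simp add: assms(3) group_hom_axioms_def group_hom_def G.is_group A.is_group)
  have px: "\<pi> x \<in> carrier A" "\<pi> y \<in> carrier A" using assms(4,5) by auto
  have "\<pi> (commutator G x y) = \<pi> x \<otimes>\<^bsub>A\<^esub> \<pi> y \<otimes>\<^bsub>A\<^esub> inv\<^bsub>A\<^esub> (\<pi> x) \<otimes>\<^bsub>A\<^esub> inv\<^bsub>A\<^esub> (\<pi> y)"
    using assms(4,5) by (simp add: commutator_def)
  also have "\<dots> = \<pi> y \<otimes>\<^bsub>A\<^esub> (\<pi> x \<otimes>\<^bsub>A\<^esub> inv\<^bsub>A\<^esub> (\<pi> x)) \<otimes>\<^bsub>A\<^esub> inv\<^bsub>A\<^esub> (\<pi> y)"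
    using px by (simp add: A.m_comm[of "\<pi> x" "\<pi> y"] A.m_assoc)
  also have "\<dots> = \<one>\<^bsub>A\<^esub>" using px by simp
  finally show ?thesis using assms(4,5) by (simp add: kernel_def commutator_def)
qed

lemma comm_lift:
  assumes "group G" "comm_group A" "\<pi> \<in> hom G A"
    "\<forall>c\<in>kernel G A \<pi>. \<forall>g\<in>carrier G. c \<otimes>\<^bsub>G\<^esub> g = g \<otimes>\<^bsub>G\<^esub> c"
    "x \<in> carrier G" "y \<in> carrier G" "x' \<in> carrier G" "y' \<in> carrier G"
    "\<pi> x = \<pi> x'" "\<pi> y = \<pi> y'"
  shows "commutator G x y = commutator G x' y'"
proof -
  interpret G: group G by fact
  interpret A: comm_group A by fact
  interpret h: group_hom G A \<pi> by (simp add: assms(3) group_hom_axioms_def group_hom_def G.is_group A.is_group)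
  define c where "c = inv\<^bsub>G\<^esub> x \<otimes>\<^bsub>G\<^esub> x'"
  define c' where "c' = inv\<^bsub>G\<^esub> y \<otimes>\<^bsub>G\<^esub> y'"
  have cc: "c \<in> carrier G" "c' \<in> carrier G" using assms(5-8) by (auto simp: c_def c'_def)
  have "\<pi> c = inv\<^bsub>A\<^esub> (\<pi> x) \<otimes>\<^bsub>A\<^esub> \<pi> x" using assms(5,7,9) by (simp add: c_def)
  then have ck: "c \<in> kernel G A \<pi>" using cc assms(5) by (simp add: kernel_def)
  have "\<pi> c' = inv\<^bsub>A\<^esub> (\<pi> y) \<otimes>\<^bsub>A\<^esub> \<pi> y" using assms(6,8,10) by (simp add: c'_def)
  then have ck': "c' \<in> kernel G A \<pi>" using cc assms(6) by (simp add: kernel_def)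
  have x': "x' = x \<otimes>\<^bsub>G\<^esub> c" using assms(5,7) by (simp add: c_def G.m_assoc[symmetric])
  have y': "y' = y \<otimes>\<^bsub>G\<^esub> c'" using assms(6,8) by (simp add: c'_def G.m_assoc[symmetric])
  show ?thesis unfolding x' y'
    by (rule comm_central[symmetric]) (use assms(1,4,5,6) cc ck ck' in auto)
qed

lemma comm_phi:
  assumes "group G" "comm_group A" "\<pi> \<in> hom G A"
    "\<forall>c\<in>kernel G A \<pi>. \<forall>g\<in>carrier G. c \<otimes>\<^bsub>G\<^esub> g = g \<otimes>\<^bsub>G\<^esub> c"
    "kernel G A \<pi> = (\<lambda>k. c0 [^]\<^bsub>G\<^esub> k) ` {..<n}" "inj_on (\<lambda>k. c0 [^]\<^bsub>G\<^esub> (k::nat)) {..<n}"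
    "x \<in> carrier G" "y \<in> carrier G"
  shows "commutator G x y = c0 [^]\<^bsub>G\<^esub> (phi_form G \<pi> c0 n (\<pi> x) (\<pi> y))"
proof -
  define g where "g = (SOME g. g \<in> carrier G \<and> \<pi> g = \<pi> x)"
  define h where "h = (SOME g. g \<in> carrier G \<and> \<pi> g = \<pi> y)"
  have g: "g \<in> carrier G \<and> \<pi> g = \<pi> x" unfolding g_def by (rule someI[of _ x]) (use assms(7) in auto)
  have h: "h \<in> carrier G \<and> \<pi> h = \<pi> y" unfolding h_def by (rule someI[of _ y]) (use assms(8) in auto)
  have eq: "commutator G x y = commutator G g h"
    by (rule comm_lift[OF assms(1-4)]) (use assms(7,8) g h in auto)
  have "commutator G g h \<in> kernel G A \<pi>"
    by (rule comm_in_ker[OF assms(1-3)]) (use g h in auto)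
  then obtain k where k: "k < n" "commutator G g h = c0 [^]\<^bsub>G\<^esub> k" using assms(5) by auto
  have "phi_form G \<pi> c0 n (\<pi> x) (\<pi> y) = k"
    unfolding phi_form_def g_def[symmetric] h_def[symmetric]
  proof (rule the_equality)
    show "k < n \<and> commutator G g h = c0 [^]\<^bsub>G\<^esub> k" using k by simp
    fix k' assume "k' < n \<and> commutator G g h = c0 [^]\<^bsub>G\<^esub> k'"
    then show "k' = k" using k assms(6) by (auto simp: inj_on_def)
  qed
  then show ?thesis using eq k by simp
qed



lemma cyc_facts:
  assumes "group C" "order C = n" "n \<ge> 1" "c0 \<in> carrier C" "subgroup_generated C {c0} = C"
  shows "group.ord C c0 = n" "carrier C = (\<lambda>k. c0 [^]\<^bsub>C\<^esub> k) ` {..<n}"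
    "inj_on (\<lambda>k. c0 [^]\<^bsub>C\<^esub> (k::nat)) {..<n}"
proof -
  interpret C: group C by fact
  show o: "C.ord c0 = n" using C.cyclic_order_is_ord[OF assms(4)] assms(2,5) by simp
  have fin: "finite (carrier C)" using assms(2,3) C.order_gt_0_iff_finite by simp
  have "carrier C = generate C {c0}"
    using carrier_subgroup_generated[of C "{c0}"] assms(4,5) by simp
  also have "\<dots> = { c0 [^]\<^bsub>C\<^esub> k | k. k \<in> (UNIV :: nat set) }"
    by (rule C.generate_pow_on_finite_carrier[OF fin assms(4)])
  finally have cr: "carrier C = { c0 [^]\<^bsub>C\<^esub> k | k. k \<in> (UNIV :: nat set) }" .
  show "carrier C = (\<lambda>k. c0 [^]\<^bsub>C\<^esub> k) ` {..<n}"
  proof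
    show "carrier C \<subseteq> (\<lambda>k. c0 [^]\<^bsub>C\<^esub> k) ` {..<n}"
    proof
      fix x assume "x \<in> carrier C"
      then obtain k::nat where k: "x = c0 [^]\<^bsub>C\<^esub> k" using cr by auto
      have "x = c0 [^]\<^bsub>C\<^esub> (k mod n)"
        using pow_mod_ord[OF assms(1,4), of n k] k o C.pow_ord_eq_1[OF assms(4)] by simp
      moreover have "k mod n < n" using assms(3) by simp
      ultimately show "x \<in> (\<lambda>k. c0 [^]\<^bsub>C\<^esub> k) ` {..<n}" by blast
    qed
  next
    show "(\<lambda>k. c0 [^]\<^bsub>C\<^esub> k) ` {..<n} \<subseteq> carrier C" using assms(4) by auto
  qed
  have "{..<n} = {0..C.ord c0 - 1}" using o assms(3) by auto
  then show "inj_on (\<lambda>k. c0 [^]\<^bsub>C\<^esub> (k::nat)) {..<n}"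
    using C.ord_inj[OF assms(4)] by simp
qed

lemma ord2_unique:
  assumes "group C" "order C = n" "n \<ge> 1" "c0 \<in> carrier C" "subgroup_generated C {c0} = C"
    "x \<in> carrier C" "x \<otimes>\<^bsub>C\<^esub> x = \<one>\<^bsub>C\<^esub>" "x \<noteq> \<one>\<^bsub>C\<^esub>"
  shows "x = c0 [^]\<^bsub>C\<^esub> (n div 2)"
proof -
  interpret C: group C by fact
  note cf = cyc_facts[OF assms(1-5)]
  obtain a where a: "a < n" "x = c0 [^]\<^bsub>C\<^esub> a" using cf(2) assms(6) by auto
  have "c0 [^]\<^bsub>C\<^esub> (a + a) = \<one>\<^bsub>C\<^esub>" using assms(7) a(2) assms(4) by (simp add: C.nat_pow_mult)
  then have "n dvd (a + a)" using C.pow_eq_id[OF assms(4)] cf(1) by simp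
  moreover have "a \<noteq> 0"
  proof
    assume "a = 0" then show False using a assms(8) by simp
  qed
  ultimately obtain m where m: "a + a = n * m" "a \<noteq> 0" by (auto elim: dvdE)
  have "m \<noteq> 0" using m by (metis add_is_0 mult_0_right)
  moreover have "m < 2"
  proof (rule ccontr)
    assume "\<not> m < 2"
    then have "n * 2 \<le> n * m" by simp
    then show False using m(1) a(1) by linarith
  qed
  ultimately have "m = 1" by linarith
  then have "a + a = n" using m by simp
  then have "a = n div 2" by simp
  then show ?thesis using a by simp
qed


lemma lift_pow:
  assumes "group G" "group C" "subgroup (carrier C) G"
    "\<forall>x\<in>carrier C. \<forall>y\<in>carrier C. x \<otimes>\<^bsub>C\<^esub> y = x \<otimes>\<^bsub>G\<^esub> y"
    "order C = n" "n \<ge> 1" "c0 \<in> carrier C" "subgroup_generated C {c0} = C"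
    "comm_group A" "\<pi> \<in> hom G A" "kernel G A \<pi> = carrier C" "g \<in> carrier G"
    "\<pi> g [^]\<^bsub>A\<^esub> d = \<one>\<^bsub>A\<^esub>" "d > 0"
    "group.ord G g = d \<or> group.ord G g = 2*d"
  shows "g [^]\<^bsub>G\<^esub> d = (if group.ord G g = d then \<one>\<^bsub>G\<^esub> else c0 [^]\<^bsub>G\<^esub> (n div 2))"
proof (cases "group.ord G g = d")
  case True
  interpret G: group G by fact
  show ?thesis using True G.pow_ord_eq_1[OF assms(12)] by simp
next
  case False
  interpret G: group G by fact
  interpret C: group C by fact
  interpret A: comm_group A by fact
  have o2: "G.ord g = 2*d" using False assms(15) by simp
  define y where "y = g [^]\<^bsub>G\<^esub> d"
  have "\<pi> y = \<one>\<^bsub>A\<^esub>" unfolding y_def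
    using hom_nat_pow[OF assms(10,12,1) A.is_group] assms(13) by simp
  then have yC: "y \<in> carrier C" using assms(11,12) by (auto simp: kernel_def y_def)
  have "y \<otimes>\<^bsub>G\<^esub> y = g [^]\<^bsub>G\<^esub> (d + d)" unfolding y_def using assms(12) by (simp add: G.nat_pow_mult)
  also have "\<dots> = \<one>\<^bsub>G\<^esub>" using G.pow_eq_id[OF assms(12), of "d+d"] o2 by (simp add: mult_2)
  finally have "y \<otimes>\<^bsub>C\<^esub> y = \<one>\<^bsub>C\<^esub>" using assms(4) yC sub_one[OF assms(1-4)] by simp
  moreover have "y \<noteq> \<one>\<^bsub>C\<^esub>"
  proof
    assume "y = \<one>\<^bsub>C\<^esub>"
    then have "g [^]\<^bsub>G\<^esub> d = \<one>\<^bsub>G\<^esub>" using sub_one[OF assms(1-4)] y_def by simp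
    then have "2*d dvd d" using G.pow_eq_id[OF assms(12)] o2 by simp
    then show False using assms(14) by (metis dvd_imp_le le_add2 mult_2 nat_dvd_not_less less_add_same_cancel1)
  qed
  ultimately have "y = c0 [^]\<^bsub>C\<^esub> (n div 2)" using ord2_unique[OF assms(2,5,6,7,8) yC] by simp
  then show ?thesis using False sub_pow[OF assms(1-4,7)] y_def by simp
qed



lemma DirProd_pow:
  assumes "group G" "group H"
  shows "(g, h) [^]\<^bsub>G \<times>\<times> H\<^esub> (k::nat) = (g [^]\<^bsub>G\<^esub> k, h [^]\<^bsub>H\<^esub> k)"
  by (induction k) simp_all

lemma hom_finprod_comm:
  assumes "comm_group Q" "comm_group A" "\<theta> \<in> hom Q A" "finite S" "f \<in> S \<rightarrow> carrier Q"
  shows "\<theta> (finprod Q f S) = finprod A (\<lambda>i. \<theta> (f i)) S"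
  using assms(4,5)
proof (induction S rule: finite_induct)
  case empty
  interpret Q: comm_group Q by fact
  interpret A: comm_group A by fact
  interpret h: group_hom Q A \<theta> by (simp add: assms(3) group_hom_axioms_def group_hom_def Q.is_group A.is_group)
  show ?case by simp
next
  case (insert a S)
  interpret Q: comm_group Q by fact
  interpret A: comm_group A by fact
  interpret h: group_hom Q A \<theta> by (simp add: assms(3) group_hom_axioms_def group_hom_def Q.is_group A.is_group)
  have fS: "f \<in> S \<rightarrow> carrier Q" "f a \<in> carrier Q" using insert by auto
  have "\<theta> (finprod Q f (insert a S)) = \<theta> (f a \<otimes>\<^bsub>Q\<^esub> finprod Q f S)"
    using insert fS by simp
  also have "\<dots> = \<theta> (f a) \<otimes>\<^bsub>A\<^esub> \<theta> (finprod Q f S)" using fS by simp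
  also have "\<dots> = \<theta> (f a) \<otimes>\<^bsub>A\<^esub> finprod A (\<lambda>i. \<theta> (f i)) S" using insert fS by simp
  also have "\<dots> = finprod A (\<lambda>i. \<theta> (f i)) (insert a S)"
    using insert fS by (subst A.finprod_insert) (auto simp: Pi_def)
  finally show ?case .
qed



theorem mainTheorem8:
  fixes C :: "('a, 'c) monoid_scheme"
    and G :: "('a, 'g) monoid_scheme"
    and H :: "('a, 'h) monoid_scheme"
    and A :: "('b, 'd) monoid_scheme"
    and c0 :: 'a and n :: nat
    and \<pi>G \<pi>H :: "'a \<Rightarrow> 'b"
    and e :: "nat \<Rightarrow> 'b" and d :: "nat \<Rightarrow> nat" and r :: nat
  assumes n_pos: "n \<ge> 1"
    and C_group: "group C"
    and C_order: "order C = n"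
    and c0_gen: "c0 \<in> carrier C" "subgroup_generated C {c0} = C"
    and A_comm: "comm_group A" and A_fin: "finite (carrier A)"
    and A_decomp: "is_internal_cyclic_decomp A e r"
    and d_def: "\<forall>i\<in>{1..r}. d i = group.ord A (e i)"
    and G_group: "group G" and H_group: "group H"
    and C_sub_G: "subgroup (carrier C) G"
      "\<forall>x\<in>carrier C. \<forall>y\<in>carrier C. x \<otimes>\<^bsub>C\<^esub> y = x \<otimes>\<^bsub>G\<^esub> y"
    and C_sub_H: "subgroup (carrier C) H"
      "\<forall>x\<in>carrier C. \<forall>y\<in>carrier C. x \<otimes>\<^bsub>C\<^esub> y = x \<otimes>\<^bsub>H\<^esub> y"
    and C_central_G: "\<forall>x\<in>carrier C. \<forall>g\<in>carrier G. x \<otimes>\<^bsub>G\<^esub> g = g \<otimes>\<^bsub>G\<^esub> x"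
    and C_central_H: "\<forall>x\<in>carrier C. \<forall>h\<in>carrier H. x \<otimes>\<^bsub>H\<^esub> h = h \<otimes>\<^bsub>H\<^esub> x"
    and \<pi>G_hom: "\<pi>G \<in> hom G A" "\<pi>G ` carrier G = carrier A" "kernel G A \<pi>G = carrier C"
    and \<pi>H_hom: "\<pi>H \<in> hom H A" "\<pi>H ` carrier H = carrier A" "kernel H A \<pi>H = carrier C"
    and phi_eq: "\<forall>a\<in>carrier A. \<forall>b\<in>carrier A. phi_form G \<pi>G c0 n a b = phi_form H \<pi>H c0 n a b"
    and lifts: "\<forall>i\<in>{1..r}. \<exists>g h. g \<in> carrier G \<and> h \<in> carrier H \<and>
                  \<pi>G g = e i \<and> \<pi>H h = e i \<and> group.ord G g = group.ord H h \<and>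
                  (group.ord G g = d i \<or> group.ord G g = 2 * d i)"
  shows "\<exists>f. f \<in> iso G H \<and> (\<forall>x\<in>carrier C. f x = x)"
proof -
  interpret G: group G by fact
  interpret H: group H by fact
  interpret C: group C by fact
  interpret A: comm_group A by fact
  let ?X = "G \<times>\<times> H"
  interpret X: group ?X by (rule DirProd_group[OF G_group H_group])
  have oneG: "\<one>\<^bsub>C\<^esub> = \<one>\<^bsub>G\<^esub>" by (rule sub_one[OF G_group C_group C_sub_G])
  have oneH: "\<one>\<^bsub>C\<^esub> = \<one>\<^bsub>H\<^esub>" by (rule sub_one[OF H_group C_group C_sub_H])
  have CG: "carrier C \<subseteq> carrier G" by (rule subgroup.subset[OF C_sub_G(1)])
  have CH: "carrier C \<subseteq> carrier H" by (rule subgroup.subset[OF C_sub_H(1)])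
  note cf = cyc_facts[OF C_group C_order n_pos c0_gen(1,2)]
  have powG: "\<And>k. c0 [^]\<^bsub>C\<^esub> (k::nat) = c0 [^]\<^bsub>G\<^esub> k"
    by (rule sub_pow[OF G_group C_group C_sub_G c0_gen(1)])
  have powH: "\<And>k. c0 [^]\<^bsub>C\<^esub> (k::nat) = c0 [^]\<^bsub>H\<^esub> k"
    by (rule sub_pow[OF H_group C_group C_sub_H c0_gen(1)])
  have hG: "group_hom G A \<pi>G" by (simp add: \<pi>G_hom(1) group_hom_axioms_def group_hom_def G.is_group A.is_group)
  have hH: "group_hom H A \<pi>H" by (simp add: \<pi>H_hom(1) group_hom_axioms_def group_hom_def H.is_group A.is_group)
  interpret hG: group_hom G A \<pi>G by (rule hG)
  interpret hH: group_hom H A \<pi>H by (rule hH)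
  have kerG: "\<And>c. c \<in> carrier C \<Longrightarrow> c \<in> carrier G \<and> \<pi>G c = \<one>\<^bsub>A\<^esub>"
    using \<pi>G_hom(3) by (auto simp: kernel_def)
  have kerH: "\<And>c. c \<in> carrier C \<Longrightarrow> c \<in> carrier H \<and> \<pi>H c = \<one>\<^bsub>A\<^esub>"
    using \<pi>H_hom(3) by (auto simp: kernel_def)
  have kerG': "\<And>c. c \<in> carrier G \<Longrightarrow> \<pi>G c = \<one>\<^bsub>A\<^esub> \<Longrightarrow> c \<in> carrier C"
    using \<pi>G_hom(3) by (auto simp: kernel_def)
  have kerH': "\<And>c. c \<in> carrier H \<Longrightarrow> \<pi>H c = \<one>\<^bsub>A\<^esub> \<Longrightarrow> c \<in> carrier C"
    using \<pi>H_hom(3) by (auto simp: kernel_def)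
  have kerG_pow: "kernel G A \<pi>G = (\<lambda>k. c0 [^]\<^bsub>G\<^esub> k) ` {..<n}" using \<pi>G_hom(3) cf(2) powG by simp
  have kerH_pow: "kernel H A \<pi>H = (\<lambda>k. c0 [^]\<^bsub>H\<^esub> k) ` {..<n}" using \<pi>H_hom(3) cf(2) powH by simp
  have injG: "inj_on (\<lambda>k. c0 [^]\<^bsub>G\<^esub> (k::nat)) {..<n}" using cf(3) powG by simp
  have injH: "inj_on (\<lambda>k. c0 [^]\<^bsub>H\<^esub> (k::nat)) {..<n}" using cf(3) powH by simp
  have centG: "\<forall>c\<in>kernel G A \<pi>G. \<forall>g\<in>carrier G. c \<otimes>\<^bsub>G\<^esub> g = g \<otimes>\<^bsub>G\<^esub> c" using \<pi>G_hom(3) C_central_G by simp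
  have centH: "\<forall>c\<in>kernel H A \<pi>H. \<forall>g\<in>carrier H. c \<otimes>\<^bsub>H\<^esub> g = g \<otimes>\<^bsub>H\<^esub> c" using \<pi>H_hom(3) C_central_H by simp
  have commG: "\<And>x y. x \<in> carrier G \<Longrightarrow> y \<in> carrier G \<Longrightarrow> commutator G x y = c0 [^]\<^bsub>G\<^esub> (phi_form G \<pi>G c0 n (\<pi>G x) (\<pi>G y))"
    by (rule comm_phi[OF G_group A_comm \<pi>G_hom(1) centG kerG_pow injG])
  have commH: "\<And>x y. x \<in> carrier H \<Longrightarrow> y \<in> carrier H \<Longrightarrow> commutator H x y = c0 [^]\<^bsub>H\<^esub> (phi_form H \<pi>H c0 n (\<pi>H x) (\<pi>H y))"
    by (rule comm_phi[OF H_group A_comm \<pi>H_hom(1) centH kerH_pow injH])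
  have commGC: "\<And>x y. x \<in> carrier G \<Longrightarrow> y \<in> carrier G \<Longrightarrow> commutator G x y \<in> carrier C"
    using comm_in_ker[OF G_group A_comm \<pi>G_hom(1)] \<pi>G_hom(3) by blast
  define M where "M = {z \<in> carrier G \<times> carrier H. \<pi>G (fst z) = \<pi>H (snd z)}"
  define D where "D = (\<lambda>c. (c,c)) ` carrier C"
  have DM: "D \<subseteq> M" unfolding D_def M_def using kerG kerH by auto
  have M_sub: "subgroup M ?X"
  proof (rule X.subgroupI)
    show "M \<subseteq> carrier ?X" unfolding M_def by auto
    have "(\<one>\<^bsub>G\<^esub>, \<one>\<^bsub>H\<^esub>) \<in> M" unfolding M_def by simp
    then show "M \<noteq> {}" by blast
  next
    fix z assume z: "z \<in> M"
    then obtain x y where xy: "z = (x,y)" "x \<in> carrier G" "y \<in> carrier H" "\<pi>G x = \<pi>H y" unfolding M_def by auto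
    show "inv\<^bsub>?X\<^esub> z \<in> M" using xy by (simp add: M_def inv_DirProd[OF G_group H_group])
  next
    fix z w assume "z \<in> M" "w \<in> M"
    then show "z \<otimes>\<^bsub>?X\<^esub> w \<in> M" unfolding M_def by (auto simp: mult_DirProd')
  qed
  define Mg where "Mg = ?X\<lparr>carrier := M\<rparr>"
  interpret Mg: group Mg unfolding Mg_def by (rule subgroup.subgroup_is_group[OF M_sub X.is_group])
  have Mg_carr[simp]: "carrier Mg = M" by (simp add: Mg_def)
  have Mg_mult[simp]: "\<And>a b. a \<otimes>\<^bsub>Mg\<^esub> b = a \<otimes>\<^bsub>?X\<^esub> b" by (simp add: Mg_def)
  have Mg_one[simp]: "\<one>\<^bsub>Mg\<^esub> = \<one>\<^bsub>?X\<^esub>" by (simp add: Mg_def)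
  have Mg_pow: "\<And>a k. a [^]\<^bsub>Mg\<^esub> (k::nat) = a [^]\<^bsub>?X\<^esub> k" unfolding Mg_def by (rule X.nat_pow_consistent[symmetric])
  have invGH: "\<And>c. c \<in> carrier C \<Longrightarrow> inv\<^bsub>G\<^esub> c \<in> carrier C \<and> inv\<^bsub>H\<^esub> c = inv\<^bsub>G\<^esub> c"
  proof -
    fix c assume c: "c \<in> carrier C"
    have i: "inv\<^bsub>G\<^esub> c \<in> carrier C" by (rule subgroup.m_inv_closed[OF C_sub_G(1) c])
    have "inv\<^bsub>G\<^esub> c \<otimes>\<^bsub>H\<^esub> c = \<one>\<^bsub>H\<^esub>"
      using C_sub_G(2) C_sub_H(2) i c oneG oneH CG by (metis G.l_inv subsetD)
    then have "inv\<^bsub>H\<^esub> c = inv\<^bsub>G\<^esub> c" using H.inv_equality i c CH by blast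
    then show "inv\<^bsub>G\<^esub> c \<in> carrier C \<and> inv\<^bsub>H\<^esub> c = inv\<^bsub>G\<^esub> c" using i by simp
  qed
  have D_sub: "subgroup D Mg"
  proof (rule Mg.subgroupI)
    show "D \<subseteq> carrier Mg" using DM by simp
    show "D \<noteq> {}" unfolding D_def by auto
  next
    fix z assume z: "z \<in> D"
    then obtain c where c: "z = (c,c)" "c \<in> carrier C" unfolding D_def by auto
    have e1: "inv\<^bsub>Mg\<^esub> z = inv\<^bsub>?X\<^esub> z" unfolding Mg_def using X.m_inv_consistent[OF M_sub] z DM by blast
    have cg: "c \<in> carrier G" "c \<in> carrier H" using c CG CH by auto
    have e2: "inv\<^bsub>?X\<^esub> z = (inv\<^bsub>G\<^esub> c, inv\<^bsub>H\<^esub> c)" unfolding c(1) by (rule inv_DirProd[OF G_group H_group cg])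
    show "inv\<^bsub>Mg\<^esub> z \<in> D" using invGH[OF c(2)] e1 e2 unfolding D_def by auto
  next
    fix z w assume "z \<in> D" "w \<in> D"
    then obtain c c' where c: "z = (c,c)" "c \<in> carrier C" "w = (c',c')" "c' \<in> carrier C" unfolding D_def by auto
    have "c \<otimes>\<^bsub>G\<^esub> c' = c \<otimes>\<^bsub>H\<^esub> c'" "c \<otimes>\<^bsub>G\<^esub> c' \<in> carrier C"
      using C_sub_G C_sub_H c by (auto intro: subgroup.m_closed)
    then show "z \<otimes>\<^bsub>Mg\<^esub> w \<in> D" using c unfolding D_def by auto
  qed
  have Dcent: "\<And>c x. c \<in> D \<Longrightarrow> x \<in> M \<Longrightarrow> c \<otimes>\<^bsub>?X\<^esub> x = x \<otimes>\<^bsub>?X\<^esub> c"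
  proof -
    fix c x assume "c \<in> D" "x \<in> M"
    then show "c \<otimes>\<^bsub>?X\<^esub> x = x \<otimes>\<^bsub>?X\<^esub> c" unfolding D_def M_def
      using C_central_G C_central_H by (auto simp: mult_DirProd')
  qed
  have D_normal: "D \<lhd> Mg"
  proof (rule Mg.normalI[OF D_sub], intro ballI)
    fix x assume x: "x \<in> carrier Mg"
    have dc: "\<And>c. c \<in> D \<Longrightarrow> c \<otimes>\<^bsub>?X\<^esub> x = x \<otimes>\<^bsub>?X\<^esub> c"
      using Dcent x Mg_carr by blast
    show "D #>\<^bsub>Mg\<^esub> x = x <#\<^bsub>Mg\<^esub> D" unfolding r_coset_def l_coset_def
      by (rule SUP_cong) (simp_all add: dc)
  qed
  interpret D: normal D Mg by (rule D_normal)
  define Q where "Q = Mg Mod D"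
  have carrQ: "carrier Q = (\<lambda>x. D #>\<^bsub>Mg\<^esub> x) ` M" unfolding Q_def by (simp add: carrier_FactGroup)
  have multQ: "\<And>x y. x \<in> M \<Longrightarrow> y \<in> M \<Longrightarrow> (D #>\<^bsub>Mg\<^esub> x) \<otimes>\<^bsub>Q\<^esub> (D #>\<^bsub>Mg\<^esub> y) = D #>\<^bsub>Mg\<^esub> (x \<otimes>\<^bsub>?X\<^esub> y)"
    unfolding Q_def using D.rcos_sum by simp
  have cosD: "\<And>c x. c \<in> D \<Longrightarrow> x \<in> M \<Longrightarrow> D #>\<^bsub>Mg\<^esub> (c \<otimes>\<^bsub>?X\<^esub> x) = D #>\<^bsub>Mg\<^esub> x"
  proof -
    fix c x assume cx: "c \<in> D" "x \<in> M"
    have "D #>\<^bsub>Mg\<^esub> (c \<otimes>\<^bsub>?X\<^esub> x) = (D #>\<^bsub>Mg\<^esub> c) #>\<^bsub>Mg\<^esub> x"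
      using Mg.coset_mult_assoc[of D c x] cx DM by auto
    also have "D #>\<^bsub>Mg\<^esub> c = D" using Mg.coset_join2[OF _ D_sub cx(1)] cx DM by auto
    finally show "D #>\<^bsub>Mg\<^esub> (c \<otimes>\<^bsub>?X\<^esub> x) = D #>\<^bsub>Mg\<^esub> x" .
  qed
  have swapM: "\<And>x y. x \<in> M \<Longrightarrow> y \<in> M \<Longrightarrow> \<exists>c\<in>D. x \<otimes>\<^bsub>?X\<^esub> y = c \<otimes>\<^bsub>?X\<^esub> (y \<otimes>\<^bsub>?X\<^esub> x)"
  proof -
    fix x y assume xy: "x \<in> M" "y \<in> M"
    obtain x1 x2 y1 y2 where e: "x = (x1,x2)" "y = (y1,y2)" by fastforce
    have m: "x1 \<in> carrier G" "x2 \<in> carrier H" "y1 \<in> carrier G" "y2 \<in> carrier H"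
       "\<pi>G x1 = \<pi>H x2" "\<pi>G y1 = \<pi>H y2" using xy e unfolding M_def by auto
    define \<gamma> where "\<gamma> = commutator G x1 y1"
    have g1: "\<gamma> = c0 [^]\<^bsub>G\<^esub> (phi_form G \<pi>G c0 n (\<pi>G x1) (\<pi>G y1))" using commG m \<gamma>_def by simp
    have g2: "commutator H x2 y2 = c0 [^]\<^bsub>H\<^esub> (phi_form H \<pi>H c0 n (\<pi>H x2) (\<pi>H y2))" using commH m by simp
    have "phi_form G \<pi>G c0 n (\<pi>G x1) (\<pi>G y1) = phi_form H \<pi>H c0 n (\<pi>H x2) (\<pi>H y2)"
      using phi_eq m by simp
    then have g12: "commutator H x2 y2 = \<gamma>" using g1 g2 powG powH by metis
    have gC: "\<gamma> \<in> carrier C" using commGC m \<gamma>_def by simp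
    have "x \<otimes>\<^bsub>?X\<^esub> y = (\<gamma>, \<gamma>) \<otimes>\<^bsub>?X\<^esub> (y \<otimes>\<^bsub>?X\<^esub> x)"
      using e m comm_swap[OF G_group m(1,3)] comm_swap[OF H_group m(2,4)] g12 \<gamma>_def by simp
    moreover have "(\<gamma>, \<gamma>) \<in> D" using gC unfolding D_def by auto
    ultimately show "\<exists>c\<in>D. x \<otimes>\<^bsub>?X\<^esub> y = c \<otimes>\<^bsub>?X\<^esub> (y \<otimes>\<^bsub>?X\<^esub> x)" by blast
  qed
  have Q_comm: "comm_group Q"
  proof (rule group.group_comm_groupI)
    show "group Q" unfolding Q_def by (rule D.factorgroup_is_group)
    fix U V assume "U \<in> carrier Q" "V \<in> carrier Q"
    then obtain x y where xy: "x \<in> M" "y \<in> M" "U = D #>\<^bsub>Mg\<^esub> x" "V = D #>\<^bsub>Mg\<^esub> y" using carrQ by auto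
    obtain c where c: "c \<in> D" "x \<otimes>\<^bsub>?X\<^esub> y = c \<otimes>\<^bsub>?X\<^esub> (y \<otimes>\<^bsub>?X\<^esub> x)" using swapM[OF xy(1,2)] by blast
    have yx: "y \<otimes>\<^bsub>?X\<^esub> x \<in> M" using xy M_sub by (simp add: subgroup.m_closed)
    show "U \<otimes>\<^bsub>Q\<^esub> V = V \<otimes>\<^bsub>Q\<^esub> U"
      using xy multQ c cosD[OF c(1) yx] by simp
  qed
  interpret Q: comm_group Q by (rule Q_comm)
  have piGM: "(\<lambda>x. \<pi>G (fst x)) \<in> hom Mg A"
  proof (rule homI)
    fix x assume "x \<in> carrier Mg" then show "\<pi>G (fst x) \<in> carrier A" by (auto simp: M_def)
  next
    fix x y assume "x \<in> carrier Mg" "y \<in> carrier Mg"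
    then show "\<pi>G (fst (x \<otimes>\<^bsub>Mg\<^esub> y)) = \<pi>G (fst x) \<otimes>\<^bsub>A\<^esub> \<pi>G (fst y)"
      by (auto simp: M_def mult_DirProd')
  qed
  obtain \<theta> where th: "\<theta> \<in> hom Q A" "\<And>x. x \<in> M \<Longrightarrow> \<theta> (D #>\<^bsub>Mg\<^esub> x) = \<pi>G (fst x)"
  proof -
    have "\<And>x y. x \<in> carrier Mg \<Longrightarrow> y \<in> carrier Mg \<Longrightarrow> D #>\<^bsub>Mg\<^esub> x = D #>\<^bsub>Mg\<^esub> y \<Longrightarrow> \<pi>G (fst x) = \<pi>G (fst y)"
    proof -
      fix x y assume xy: "x \<in> carrier Mg" "y \<in> carrier Mg" "D #>\<^bsub>Mg\<^esub> x = D #>\<^bsub>Mg\<^esub> y"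
      have "x \<in> D #>\<^bsub>Mg\<^esub> y" using Mg.rcos_self[OF xy(1) D_sub] xy(3) by simp
      then obtain c where c: "c \<in> D" "x = c \<otimes>\<^bsub>Mg\<^esub> y" unfolding r_coset_def by auto
      then obtain c0' where "c = (c0', c0')" "c0' \<in> carrier C" unfolding D_def by auto
      then show "\<pi>G (fst x) = \<pi>G (fst y)" using c xy(2) kerG by (auto simp: M_def mult_DirProd')
    qed
    from FactGroup_universal[OF piGM D_normal this] obtain g where
      "g \<in> hom (Mg Mod D) A" "\<And>x. x \<in> carrier Mg \<Longrightarrow> g (r_coset Mg D x) = \<pi>G (fst x)" by blast
    then show thesis using that unfolding Q_def by simp
  qed
  have thH: "\<And>x. x \<in> M \<Longrightarrow> \<theta> (D #>\<^bsub>Mg\<^esub> x) = \<pi>H (snd x)" using th(2) by (auto simp: M_def)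
  have "\<forall>i\<in>{1..r}. \<exists>pp. fst pp \<in> carrier G \<and> snd pp \<in> carrier H \<and>
                  \<pi>G (fst pp) = e i \<and> \<pi>H (snd pp) = e i \<and> group.ord G (fst pp) = group.ord H (snd pp) \<and>
                  (group.ord G (fst pp) = d i \<or> group.ord G (fst pp) = 2 * d i)"
    using lifts by force
  then obtain p where p: "\<forall>i\<in>{1..r}. fst (p i) \<in> carrier G \<and> snd (p i) \<in> carrier H \<and>
                  \<pi>G (fst (p i)) = e i \<and> \<pi>H (snd (p i)) = e i \<and> group.ord G (fst (p i)) = group.ord H (snd (p i)) \<and>
                  (group.ord G (fst (p i)) = d i \<or> group.ord G (fst (p i)) = 2 * d i)"
    by (metis bchoice)
  have eA: "\<And>i. i \<in> {1..r} \<Longrightarrow> e i \<in> carrier A" using A_decomp unfolding is_internal_cyclic_decomp_def by blast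
  have dpos: "\<And>i. i \<in> {1..r} \<Longrightarrow> d i > 0" using d_def A.ord_ge_1[OF A_fin eA] by fastforce
  have ed: "\<And>i. i \<in> {1..r} \<Longrightarrow> e i [^]\<^bsub>A\<^esub> d i = \<one>\<^bsub>A\<^esub>" using d_def eA A.pow_ord_eq_1 by simp
  have pM: "\<And>i. i \<in> {1..r} \<Longrightarrow> p i \<in> M" using p by (auto simp: M_def mem_Times_iff)
  have pD: "\<And>i. i \<in> {1..r} \<Longrightarrow> p i [^]\<^bsub>Mg\<^esub> d i \<in> D"
  proof -
    fix i assume i: "i \<in> {1..r}"
    obtain g h where gh: "p i = (g, h)" by fastforce
    have pi: "g \<in> carrier G" "h \<in> carrier H" "\<pi>G g = e i" "\<pi>H h = e i" "G.ord g = H.ord h"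
       "G.ord g = d i \<or> G.ord g = 2 * d i" using bspec[OF p i] gh by auto
    have g1: "g [^]\<^bsub>G\<^esub> d i = (if G.ord g = d i then \<one>\<^bsub>G\<^esub> else c0 [^]\<^bsub>G\<^esub> (n div 2))"
      by (rule lift_pow[OF G_group C_group C_sub_G C_order n_pos c0_gen A_comm \<pi>G_hom(1,3) pi(1)])
         (use pi ed[OF i] dpos[OF i] in auto)
    have h1: "h [^]\<^bsub>H\<^esub> d i = (if H.ord h = d i then \<one>\<^bsub>H\<^esub> else c0 [^]\<^bsub>H\<^esub> (n div 2))"
      by (rule lift_pow[OF H_group C_group C_sub_H C_order n_pos c0_gen A_comm \<pi>H_hom(1,3) pi(2)])
         (use pi ed[OF i] dpos[OF i] in auto)
    define v where "v = (if G.ord g = d i then \<one>\<^bsub>C\<^esub> else c0 [^]\<^bsub>C\<^esub> (n div 2))"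
    have vC: "v \<in> carrier C" unfolding v_def using c0_gen(1) by simp
    have "g [^]\<^bsub>G\<^esub> d i = v" "h [^]\<^bsub>H\<^esub> d i = v" using g1 h1 pi(5) oneG oneH powG powH v_def by auto
    then have "p i [^]\<^bsub>Mg\<^esub> d i = (v, v)" using gh Mg_pow DirProd_pow[OF G_group H_group] by simp
    then show "p i [^]\<^bsub>Mg\<^esub> d i \<in> D" using vC unfolding D_def by auto
  qed
  define q where "q i = D #>\<^bsub>Mg\<^esub> p i" for i
  have qQ: "\<And>i. i \<in> {1..r} \<Longrightarrow> q i \<in> carrier Q" using carrQ pM q_def by auto
  have qpow: "\<And>i k. i \<in> {1..r} \<Longrightarrow> q i [^]\<^bsub>Q\<^esub> (k::nat) = D #>\<^bsub>Mg\<^esub> (p i [^]\<^bsub>Mg\<^esub> k)"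
    unfolding q_def Q_def using D.FactGroup_pow pM by simp
  have oneQ: "\<one>\<^bsub>Q\<^esub> = D" unfolding Q_def by simp
  have qd: "\<And>i. i \<in> {1..r} \<Longrightarrow> q i [^]\<^bsub>Q\<^esub> d i = \<one>\<^bsub>Q\<^esub>"
  proof -
    fix i assume i: "i \<in> {1..r}"
    have "p i [^]\<^bsub>Mg\<^esub> d i \<in> carrier Mg" using pM[OF i] Mg.nat_pow_closed[of "p i"] by simp
    then show "q i [^]\<^bsub>Q\<^esub> d i = \<one>\<^bsub>Q\<^esub>" using qpow[OF i] oneQ Mg.coset_join2[OF _ D_sub pD[OF i]] by simp
  qed
  have thq: "\<And>i. i \<in> {1..r} \<Longrightarrow> \<theta> (q i) = e i" unfolding q_def using th(2) pM p by simp
  define P where "P k = finprod Q (\<lambda>i. q i [^]\<^bsub>Q\<^esub> (k i :: nat)) {1..r}" for k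
  have qk: "\<And>k. (\<lambda>i. q i [^]\<^bsub>Q\<^esub> (k i :: nat)) \<in> {1..r} \<rightarrow> carrier Q" using qQ by auto
  have PQ: "\<And>k. P k \<in> carrier Q" unfolding P_def using qk by simp
  have thP: "\<And>k. \<theta> (P k) = finprod A (\<lambda>i. e i [^]\<^bsub>A\<^esub> k i) {1..r}"
  proof -
    fix k
    have "\<theta> (P k) = finprod A (\<lambda>i. \<theta> (q i [^]\<^bsub>Q\<^esub> (k i :: nat))) {1..r}"
      unfolding P_def by (rule hom_finprod_comm[OF Q_comm A_comm th(1) _ qk]) simp
    also have "\<dots> = finprod A (\<lambda>i. e i [^]\<^bsub>A\<^esub> k i) {1..r}"
    proof (rule A.finprod_cong')
      show "(\<lambda>i. e i [^]\<^bsub>A\<^esub> k i) \<in> {1..r} \<rightarrow> carrier A" using eA by auto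
      fix i assume i: "i \<in> {1..r}"
      show "\<theta> (q i [^]\<^bsub>Q\<^esub> k i) = e i [^]\<^bsub>A\<^esub> k i"
        using hom_nat_pow[OF th(1) qQ[OF i] Q.is_group A.is_group] thq[OF i] by simp
    qed simp
    finally show "\<theta> (P k) = finprod A (\<lambda>i. e i [^]\<^bsub>A\<^esub> k i) {1..r}" .
  qed
  have Pcong: "\<And>k l. (\<And>i. i \<in> {1..r} \<Longrightarrow> k i = l i) \<Longrightarrow> P k = P l"
    unfolding P_def by (rule Q.finprod_cong') (use qk in auto)
  have Pmult: "\<And>k l. P k \<otimes>\<^bsub>Q\<^esub> P l = P (\<lambda>i. (k i + l i) mod d i)"
  proof -
    fix k l
    have "P k \<otimes>\<^bsub>Q\<^esub> P l = finprod Q (\<lambda>i. q i [^]\<^bsub>Q\<^esub> k i \<otimes>\<^bsub>Q\<^esub> q i [^]\<^bsub>Q\<^esub> l i) {1..r}"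
      unfolding P_def using qk by simp
    also have "\<dots> = P (\<lambda>i. (k i + l i) mod d i)" unfolding P_def
    proof (rule Q.finprod_cong')
      show "(\<lambda>i. q i [^]\<^bsub>Q\<^esub> ((k i + l i) mod d i)) \<in> {1..r} \<rightarrow> carrier Q" using qQ by auto
      fix i assume i: "i \<in> {1..r}"
      show "q i [^]\<^bsub>Q\<^esub> k i \<otimes>\<^bsub>Q\<^esub> q i [^]\<^bsub>Q\<^esub> l i = q i [^]\<^bsub>Q\<^esub> ((k i + l i) mod d i)"
        using pow_mod_ord[OF Q.is_group qQ[OF i] qd[OF i]] qQ[OF i] by (simp add: Q.nat_pow_mult)
    qed simp
    finally show "P k \<otimes>\<^bsub>Q\<^esub> P l = P (\<lambda>i. (k i + l i) mod d i)" .
  qed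
  have "P (\<lambda>i. 0) = \<one>\<^bsub>Q\<^esub>" unfolding P_def by (rule Q.finprod_one_eqI) simp
  then have P0: "P (\<lambda>i. 0) = D" using oneQ by simp
  define E where "E = PiE {1..r} (\<lambda>i. {..<d i})"
  have bij: "bij_betw (\<lambda>k. finprod A (\<lambda>i. e i [^]\<^bsub>A\<^esub> k i) {1..r}) E (carrier A)"
  proof -
    have "E = PiE {1..r} (\<lambda>i. {..<A.ord (e i)})" unfolding E_def by (rule PiE_cong) (use d_def in simp)
    then show ?thesis using A_decomp unfolding is_internal_cyclic_decomp_def by simp
  qed
  define k0 where "k0 = (\<lambda>i\<in>{1..r}. 0::nat)"
  have k0E: "k0 \<in> E" unfolding k0_def E_def using dpos by auto
  have Pk0: "P k0 = D" using Pcong[of k0 "\<lambda>i. 0"] P0 unfolding k0_def by simp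
  have ek0: "finprod A (\<lambda>i. e i [^]\<^bsub>A\<^esub> k0 i) {1..r} = \<one>\<^bsub>A\<^esub>"
    by (rule A.finprod_one_eqI) (simp add: k0_def)
  define K where "K = {z \<in> M. \<exists>k\<in>E. D #>\<^bsub>Mg\<^esub> z = P k}"
  have cosM: "\<And>z. z \<in> M \<Longrightarrow> D #>\<^bsub>Mg\<^esub> z \<in> carrier Q" using carrQ by auto
  have DK: "D \<subseteq> K"
  proof
    fix z assume z: "z \<in> D"
    have "D #>\<^bsub>Mg\<^esub> z = D" using Mg.coset_join2[OF _ D_sub z] z DM by auto
    then show "z \<in> K" unfolding K_def using z DM k0E Pk0 by auto
  qed
  have K_sub: "subgroup K ?X"
  proof (rule X.subgroupI)
    show "K \<subseteq> carrier ?X" unfolding K_def M_def by auto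
    show "K \<noteq> {}" using DK unfolding D_def by auto
  next
    fix z assume z: "z \<in> K"
    then obtain k where k: "z \<in> M" "k \<in> E" "D #>\<^bsub>Mg\<^esub> z = P k" unfolding K_def by auto
    have izM: "inv\<^bsub>?X\<^esub> z \<in> M" using subgroup.m_inv_closed[OF M_sub k(1)] .
    have iz: "inv\<^bsub>Mg\<^esub> z = inv\<^bsub>?X\<^esub> z" unfolding Mg_def using X.m_inv_consistent[OF M_sub k(1)] .
    define k' where "k' = (\<lambda>i\<in>{1..r}. (d i - k i) mod d i)"
    have k'E: "k' \<in> E" unfolding k'_def E_def using dpos by auto
    have "P k' \<otimes>\<^bsub>Q\<^esub> P k = P (\<lambda>i. (k' i + k i) mod d i)" by (rule Pmult)
    also have "\<dots> = P (\<lambda>i. 0)"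
    proof (rule Pcong)
      fix i assume i: "i \<in> {1..r}"
      have "k i < d i" using k(2) i unfolding E_def by auto
      then show "(k' i + k i) mod d i = 0" using i unfolding k'_def by (simp add: mod_add_left_eq)
    qed
    finally have "P k' \<otimes>\<^bsub>Q\<^esub> P k = \<one>\<^bsub>Q\<^esub>" using P0 oneQ by simp
    then have invP: "inv\<^bsub>Q\<^esub> (P k) = P k'" by (rule Q.inv_equality[OF _ PQ PQ])
    have "D #>\<^bsub>Mg\<^esub> (inv\<^bsub>?X\<^esub> z) = set_inv\<^bsub>Mg\<^esub> (D #>\<^bsub>Mg\<^esub> z)"
      using D.rcos_inv[of z] k(1) iz by simp
    also have "\<dots> = inv\<^bsub>Q\<^esub> (D #>\<^bsub>Mg\<^esub> z)" unfolding Q_def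
      using D.inv_FactGroup[symmetric] cosM[OF k(1)] unfolding Q_def by simp
    finally have "D #>\<^bsub>Mg\<^esub> (inv\<^bsub>?X\<^esub> z) = P k'" using k(3) invP by simp
    then show "inv\<^bsub>?X\<^esub> z \<in> K" unfolding K_def using izM k'E by auto
  next
    fix z w assume "z \<in> K" "w \<in> K"
    then obtain k l where kl: "z \<in> M" "k \<in> E" "D #>\<^bsub>Mg\<^esub> z = P k" "w \<in> M" "l \<in> E" "D #>\<^bsub>Mg\<^esub> w = P l"
      unfolding K_def by auto
    have zw: "z \<otimes>\<^bsub>?X\<^esub> w \<in> M" using subgroup.m_closed[OF M_sub kl(1,4)] .
    define m where "m = (\<lambda>i\<in>{1..r}. (k i + l i) mod d i)"
    have mE: "m \<in> E" unfolding m_def E_def using dpos by auto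
    have "D #>\<^bsub>Mg\<^esub> (z \<otimes>\<^bsub>?X\<^esub> w) = P k \<otimes>\<^bsub>Q\<^esub> P l" using multQ[OF kl(1,4)] kl by simp
    also have "\<dots> = P m" unfolding Pmult by (rule Pcong) (simp add: m_def)
    finally show "z \<otimes>\<^bsub>?X\<^esub> w \<in> K" unfolding K_def using zw mE by auto
  qed
  have KD: "\<And>z. z \<in> K \<Longrightarrow> fst z \<in> carrier C \<Longrightarrow> z \<in> D"
  proof -
    fix z assume z: "z \<in> K" "fst z \<in> carrier C"
    then obtain k where k: "z \<in> M" "k \<in> E" "D #>\<^bsub>Mg\<^esub> z = P k" unfolding K_def by auto
    have "\<theta> (P k) = \<one>\<^bsub>A\<^esub>" using th(2)[OF k(1)] k(3) kerG[OF z(2)] by simp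
    then have "finprod A (\<lambda>i. e i [^]\<^bsub>A\<^esub> k i) {1..r} = finprod A (\<lambda>i. e i [^]\<^bsub>A\<^esub> k0 i) {1..r}"
      using thP ek0 by simp
    then have "k = k0" by (rule inj_onD[OF bij_betw_imp_inj_on[OF bij] _ k(2) k0E])
    then have "D #>\<^bsub>Mg\<^esub> z = D" using k(3) Pk0 by simp
    moreover have "z \<in> D #>\<^bsub>Mg\<^esub> z" using Mg.rcos_self[OF _ D_sub] k(1) by simp
    ultimately show "z \<in> D" by simp
  qed
  have Kpair: "\<And>x y. (x, y) \<in> K \<Longrightarrow> x \<in> carrier G \<and> y \<in> carrier H \<and> \<pi>G x = \<pi>H y"
    unfolding K_def M_def by auto
  have surjG: "\<And>x. x \<in> carrier G \<Longrightarrow> \<exists>y. (x, y) \<in> K"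
  proof -
    fix x assume x: "x \<in> carrier G"
    have "\<pi>G x \<in> carrier A" using x by simp
    then have "\<pi>G x \<in> (\<lambda>k. finprod A (\<lambda>i. e i [^]\<^bsub>A\<^esub> k i) {1..r}) ` E"
      using bij_betw_imp_surj_on[OF bij] by simp
    then obtain k where k': "\<pi>G x = finprod A (\<lambda>i. e i [^]\<^bsub>A\<^esub> k i) {1..r}" "k \<in> E"
      by (rule imageE)
    then have k: "k \<in> E" "finprod A (\<lambda>i. e i [^]\<^bsub>A\<^esub> k i) {1..r} = \<pi>G x" by simp_all
    obtain y where y: "y \<in> M" "P k = D #>\<^bsub>Mg\<^esub> y" using PQ[of k] carrQ by auto
    have "\<theta> (P k) = \<pi>G x" using thP[of k] k(2) by simp
    then have ya: "\<pi>G (fst y) = \<pi>G x" using th(2)[OF y(1)] y(2) by simp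
    have yc: "fst y \<in> carrier G" "snd y \<in> carrier H" "\<pi>G (fst y) = \<pi>H (snd y)" using y(1) unfolding M_def by auto
    define c where "c = x \<otimes>\<^bsub>G\<^esub> inv\<^bsub>G\<^esub> (fst y)"
    have cG: "c \<in> carrier G" using x yc unfolding c_def by simp
    have "\<pi>G c = \<one>\<^bsub>A\<^esub>" using x yc ya unfolding c_def by simp
    then have cC: "c \<in> carrier C" using kerG' cG by simp
    have cH: "c \<in> carrier H" "\<pi>H c = \<one>\<^bsub>A\<^esub>" using kerH[OF cC] by auto
    have cD: "(c, c) \<in> D" using cC unfolding D_def by auto
    define z where "z = (c, c) \<otimes>\<^bsub>?X\<^esub> y"
    have zM: "z \<in> M" unfolding z_def using subgroup.m_closed[OF M_sub _ y(1)] cD DM by auto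
    have "D #>\<^bsub>Mg\<^esub> z = P k" unfolding z_def using cosD[OF cD y(1)] y(2) by simp
    then have zK: "z \<in> K" unfolding K_def using zM k(1) by auto
    have "fst z = x" unfolding z_def c_def using x yc by (simp add: mult_DirProd' G.m_assoc)
    then have "z = (x, snd z)" by (cases z) simp
    then show "\<exists>y. (x, y) \<in> K" using zK by (intro exI[of _ "snd z"]) simp
  qed
  have surjH: "\<And>x. x \<in> carrier H \<Longrightarrow> \<exists>y. (y, x) \<in> K"
  proof -
    fix x assume x: "x \<in> carrier H"
    have "\<pi>H x \<in> carrier A" using x by simp
    then have "\<pi>H x \<in> (\<lambda>k. finprod A (\<lambda>i. e i [^]\<^bsub>A\<^esub> k i) {1..r}) ` E"
      using bij_betw_imp_surj_on[OF bij] by simp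
    then obtain k where k': "\<pi>H x = finprod A (\<lambda>i. e i [^]\<^bsub>A\<^esub> k i) {1..r}" "k \<in> E"
      by (rule imageE)
    then have k: "k \<in> E" "finprod A (\<lambda>i. e i [^]\<^bsub>A\<^esub> k i) {1..r} = \<pi>H x" by simp_all
    obtain y where y: "y \<in> M" "P k = D #>\<^bsub>Mg\<^esub> y" using PQ[of k] carrQ by auto
    have "\<theta> (P k) = \<pi>H x" using thP[of k] k(2) by simp
    then have ya: "\<pi>H (snd y) = \<pi>H x" using thH[OF y(1)] y(2) by simp
    have yc: "fst y \<in> carrier G" "snd y \<in> carrier H" "\<pi>G (fst y) = \<pi>H (snd y)" using y(1) unfolding M_def by auto
    define c where "c = x \<otimes>\<^bsub>H\<^esub> inv\<^bsub>H\<^esub> (snd y)"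
    have cG: "c \<in> carrier H" using x yc unfolding c_def by simp
    have "\<pi>H c = \<one>\<^bsub>A\<^esub>" using x yc ya unfolding c_def by simp
    then have cC: "c \<in> carrier C" using kerH' cG by simp
    have cD: "(c, c) \<in> D" using cC unfolding D_def by auto
    define z where "z = (c, c) \<otimes>\<^bsub>?X\<^esub> y"
    have zM: "z \<in> M" unfolding z_def using subgroup.m_closed[OF M_sub _ y(1)] cD DM by auto
    have "D #>\<^bsub>Mg\<^esub> z = P k" unfolding z_def using cosD[OF cD y(1)] y(2) by simp
    then have zK: "z \<in> K" unfolding K_def using zM k(1) by auto
    have "snd z = x" unfolding z_def c_def using x yc by (simp add: mult_DirProd' H.m_assoc)
    then have "z = (fst z, x)" by (cases z) simp
    then show "\<exists>y. (y, x) \<in> K" using zK by (intro exI[of _ "fst z"]) simp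
  qed
  have uniqG: "\<And>x y y'. (x, y) \<in> K \<Longrightarrow> (x, y') \<in> K \<Longrightarrow> y = y'"
  proof -
    fix x y y' assume a: "(x, y) \<in> K" "(x, y') \<in> K"
    have c: "x \<in> carrier G" "y \<in> carrier H" "y' \<in> carrier H" "\<pi>G x = \<pi>H y" "\<pi>G x = \<pi>H y'"
      using Kpair[OF a(1)] Kpair[OF a(2)] by auto
    have "inv\<^bsub>?X\<^esub> (x, y) \<otimes>\<^bsub>?X\<^esub> (x, y') \<in> K"
      using subgroup.m_closed[OF K_sub subgroup.m_inv_closed[OF K_sub a(1)] a(2)] .
    moreover have "inv\<^bsub>?X\<^esub> (x, y) \<otimes>\<^bsub>?X\<^esub> (x, y') = (\<one>\<^bsub>G\<^esub>, inv\<^bsub>H\<^esub> y \<otimes>\<^bsub>H\<^esub> y')"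
      using c inv_DirProd[OF G_group H_group c(1,2)] by simp
    ultimately have wK: "(\<one>\<^bsub>G\<^esub>, inv\<^bsub>H\<^esub> y \<otimes>\<^bsub>H\<^esub> y') \<in> K" by simp
    have "(\<one>\<^bsub>G\<^esub>, inv\<^bsub>H\<^esub> y \<otimes>\<^bsub>H\<^esub> y') \<in> D" using KD[OF wK] C.one_closed oneG by simp
    then have w1: "inv\<^bsub>H\<^esub> y \<otimes>\<^bsub>H\<^esub> y' = \<one>\<^bsub>H\<^esub>" unfolding D_def using oneG oneH by auto
    have "y \<otimes>\<^bsub>H\<^esub> (inv\<^bsub>H\<^esub> y \<otimes>\<^bsub>H\<^esub> y') = y'" using c by (simp add: H.m_assoc[symmetric])
    then show "y = y'" using w1 c by simp
  qed
  have uniqH: "\<And>x x' y. (x, y) \<in> K \<Longrightarrow> (x', y) \<in> K \<Longrightarrow> x = x'"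
  proof -
    fix x x' y assume a: "(x, y) \<in> K" "(x', y) \<in> K"
    have c: "x \<in> carrier G" "x' \<in> carrier G" "y \<in> carrier H" "\<pi>G x = \<pi>H y" "\<pi>G x' = \<pi>H y"
      using Kpair[OF a(1)] Kpair[OF a(2)] by auto
    have "inv\<^bsub>?X\<^esub> (x, y) \<otimes>\<^bsub>?X\<^esub> (x', y) \<in> K"
      using subgroup.m_closed[OF K_sub subgroup.m_inv_closed[OF K_sub a(1)] a(2)] .
    moreover have "inv\<^bsub>?X\<^esub> (x, y) \<otimes>\<^bsub>?X\<^esub> (x', y) = (inv\<^bsub>G\<^esub> x \<otimes>\<^bsub>G\<^esub> x', \<one>\<^bsub>H\<^esub>)"
      using c inv_DirProd[OF G_group H_group c(1,3)] by simp
    moreover have "inv\<^bsub>G\<^esub> x \<otimes>\<^bsub>G\<^esub> x' \<in> carrier C" using c kerG' by simp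
    ultimately have wK: "(inv\<^bsub>G\<^esub> x \<otimes>\<^bsub>G\<^esub> x', \<one>\<^bsub>H\<^esub>) \<in> K" "inv\<^bsub>G\<^esub> x \<otimes>\<^bsub>G\<^esub> x' \<in> carrier C" by simp_all
    have "(inv\<^bsub>G\<^esub> x \<otimes>\<^bsub>G\<^esub> x', \<one>\<^bsub>H\<^esub>) \<in> D" using KD[OF wK(1)] wK(2) by simp
    then have w1: "inv\<^bsub>G\<^esub> x \<otimes>\<^bsub>G\<^esub> x' = \<one>\<^bsub>G\<^esub>" unfolding D_def using oneG oneH by auto
    have "x \<otimes>\<^bsub>G\<^esub> (inv\<^bsub>G\<^esub> x \<otimes>\<^bsub>G\<^esub> x') = x'" using c by (simp add: G.m_assoc[symmetric])
    then show "x = x'" using w1 c by simp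
  qed
  define f where "f x = (THE y. (x, y) \<in> K)" for x
  have fK: "\<And>x. x \<in> carrier G \<Longrightarrow> (x, f x) \<in> K"
  proof -
    fix x assume "x \<in> carrier G"
    then obtain y where yK: "(x, y) \<in> K" using surjG by blast
    show "(x, f x) \<in> K" unfolding f_def
    proof (rule theI[of _ y])
      show "(x, y) \<in> K" by (rule yK)
      fix y' assume "(x, y') \<in> K"
      then show "y' = y" using uniqG[OF yK] by simp
    qed
  qed
  have fval: "\<And>x y. (x, y) \<in> K \<Longrightarrow> f x = y" using fK uniqG Kpair by blast
  have fhom: "f \<in> hom G H"
  proof (rule homI)
    fix x assume "x \<in> carrier G" then show "f x \<in> carrier H" using fK Kpair by blast
  next
    fix x y assume xy: "x \<in> carrier G" "y \<in> carrier G"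
    have "(x, f x) \<otimes>\<^bsub>?X\<^esub> (y, f y) \<in> K" using subgroup.m_closed[OF K_sub fK[OF xy(1)] fK[OF xy(2)]] .
    then have "(x \<otimes>\<^bsub>G\<^esub> y, f x \<otimes>\<^bsub>H\<^esub> f y) \<in> K" by simp
    then show "f (x \<otimes>\<^bsub>G\<^esub> y) = f x \<otimes>\<^bsub>H\<^esub> f y" by (rule fval)
  qed
  have fbij: "bij_betw f (carrier G) (carrier H)"
  proof (rule bij_betw_imageI)
    show "inj_on f (carrier G)"
    proof (rule inj_onI)
      fix x x' assume "x \<in> carrier G" "x' \<in> carrier G" "f x = f x'"
      then show "x = x'" using fK uniqH by metis
    qed
    show "f ` carrier G = carrier H"
    proof
      show "f ` carrier G \<subseteq> carrier H" using fK Kpair by blast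
      show "carrier H \<subseteq> f ` carrier G"
      proof
        fix y assume "y \<in> carrier H"
        then obtain x where x: "(x, y) \<in> K" using surjH by blast
        then have "f x = y" "x \<in> carrier G" using fval Kpair by auto
        then show "y \<in> f ` carrier G" by blast
      qed
    qed
  qed
  have fid: "\<forall>x\<in>carrier C. f x = x"
  proof
    fix x assume "x \<in> carrier C"
    then have "(x, x) \<in> K" using DK unfolding D_def by auto
    then show "f x = x" by (rule fval)
  qed
  show ?thesis using fhom fbij fid unfolding iso_def by blast
qed

end
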